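(* Let $G=(G_{ij})_{1\le i,j\le n}$ be a real symmetric matrix and $f\in\{1,\dots,n\}$ such that $G_{ff}=0$, $G_{ij}=0$ whenever $i<f<j$, and the principal submatrices $G'$ on $\{1,\dots,f-1\}$ and $G''$ on $\{f+1,\dots,n\}$ are Gram matrices of simple roots of semisimple Lie algebras $\mathfrak g',\mathfrak g''$ (hence positive definite) whose long roots have squared length $2d'$ resp. $2d''$. For $r',r''\in\mathbb R$ define $m^S_{ij}=r'G_{ij}$ if $i,j\le f$ and $(i,j)\ne(f,f)$; $m^S_{ij}=r''G_{ij}$ if $i,j\ge f$ and $(i,j)\neq(f,f)$; $m^S_{ij}=0$ if $i<f<j$ or $j<f<i$; $m^S_{ff}=1$. If $0<r'\le\frac1{2d'}$, $0<r''\le\frac1{2d''}$ and $\det(m^S)>0$, then $m^S$ is positive definite and $m^S_{ii}\le1$ for all $i$ (so smallness holds and all Nichols algebra relations of $\mathcal B(q)$, $q_{ij}=e^{i\pi m^S_{ij}}$, hold for the corresponding screening operators).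
   Context: This is the Gram matrix in the standard chamber associated to a basic classical Lie superalgebra with a single fermionic simple root $\alpha_f$; $G_{ij}=(\alpha_i,\alpha_j)$. The consequence uses the criterion: positive definiteness and $m_{ii}\le1$ imply that all relations of the diagonal Nichols algebra hold for the Heisenberg screening operators. *)

theory Defs
  imports "Jordan_Normal_Form.Determinant"
begin

(* Matrices are functions nat => nat => real, indexed 1-based on {1..n}. *)

definition mat_of_fun :: "nat \<Rightarrow> (nat \<Rightarrow> nat \<Rightarrow> real) \<Rightarrow> real mat" where
  "mat_of_fun n M = mat n n (\<lambda>(i, j). M (i + 1) (j + 1))"

definition pos_def_on :: "nat set \<Rightarrow> (nat \<Rightarrow> nat \<Rightarrow> real) \<Rightarrow> bool" where
  "pos_def_on I M \<longleftrightarrow>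
     (\<forall>x :: nat \<Rightarrow> real. (\<exists>i\<in>I. x i \<noteq> 0) \<longrightarrow>
        (\<Sum>i\<in>I. \<Sum>j\<in>I. x i * M i j * x j) > 0)"

(* The principal submatrix of G on I is the Gram matrix of a system of simple roots of a
   semisimple Lie algebra: symmetric, positive definite, with positive diagonal, and the
   associated matrix a_ij = 2 G_ij / G_ii is a (generalized) Cartan matrix, i.e. its
   off-diagonal entries are non-positive integers.  (Symmetrizable GCMs with positive definite
   symmetrization are exactly the Cartan matrices of finite type.) *)
definition semisimple_gram :: "nat set \<Rightarrow> (nat \<Rightarrow> nat \<Rightarrow> real) \<Rightarrow> bool" where
  "semisimple_gram I G \<longleftrightarrow>
     (\<forall>i\<in>I. \<forall>j\<in>I. G i j = G j i) \<and>
     (\<forall>i\<in>I. G i i > 0) \<and>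
     (\<forall>i\<in>I. \<forall>j\<in>I. i \<noteq> j \<longrightarrow> (\<exists>k::nat. 2 * G i j / G i i = - real k)) \<and>
     pos_def_on I G"

definition long_root_sqlen :: "nat set \<Rightarrow> (nat \<Rightarrow> nat \<Rightarrow> real) \<Rightarrow> real \<Rightarrow> bool" where
  "long_root_sqlen I G c \<longleftrightarrow> (\<forall>i\<in>I. G i i \<le> c) \<and> (I \<noteq> {} \<longrightarrow> (\<exists>i\<in>I. G i i = c))"

definition mS :: "(nat \<Rightarrow> nat \<Rightarrow> real) \<Rightarrow> nat \<Rightarrow> real \<Rightarrow> real \<Rightarrow> nat \<Rightarrow> nat \<Rightarrow> real" where
  "mS G f r1 r2 i j =
     (if i = f \<and> j = f then 1
      else if i \<le> f \<and> j \<le> f then r1 * G i j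
      else if f \<le> i \<and> f \<le> j then r2 * G i j
      else 0)"

end

theory Submission
  imports Defs
begin

definition dl :: "nat \<Rightarrow> nat \<Rightarrow> nat" where "dl p i = (if i < p then i else Suc i)"
definition Qf :: "nat \<Rightarrow> (nat\<Rightarrow>nat\<Rightarrow>real) \<Rightarrow> (nat\<Rightarrow>real) \<Rightarrow> real" where
  "Qf m M x = (\<Sum>i<m. \<Sum>j<m. x i * M i j * x j)"
definition elim :: "nat \<Rightarrow> (nat\<Rightarrow>nat\<Rightarrow>real) \<Rightarrow> nat \<Rightarrow> nat \<Rightarrow> real" where
  "elim p M i j = M (dl p i) (dl p j) - M (dl p i) p * M p (dl p j) / M p p"

lemma dl_inj: "dl p i = dl p j \<longleftrightarrow> i = j" by (auto simp: dl_def)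
lemma dl_ne: "dl p i \<noteq> p" by (auto simp: dl_def)
lemma dl_lt: "i < m \<Longrightarrow> dl p i < Suc m" by (auto simp: dl_def)

lemma sum_split:
  assumes "p \<le> m"
  shows "(\<Sum>i<Suc m. g i) = g p + (\<Sum>i<m. g (dl p i))"
proof -
  have im: "{..<Suc m} = insert p (dl p ` {..<m})"
  proof
    show "{..<Suc m} \<subseteq> insert p (dl p ` {..<m})"
    proof
      fix k assume k: "k \<in> {..<Suc m}"
      show "k \<in> insert p (dl p ` {..<m})"
      proof (cases "k < p")
        case True then have "dl p k = k" by (simp add: dl_def)
        moreover have "k < m" using True assms by simp
        ultimately show ?thesis by (metis imageI insertI2 lessThan_iff)
      next
        case False
        show ?thesis
        proof (cases "k = p")
          case False2: False
          then have "dl p (k - 1) = k" using False by (auto simp: dl_def)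
          moreover have "k - 1 < m" using k False False2 by auto
          ultimately show ?thesis by (metis imageI insertI2 lessThan_iff)
        qed simp
      qed
    qed
    show "insert p (dl p ` {..<m}) \<subseteq> {..<Suc m}" using assms by (auto simp: dl_def)
  qed
  have "p \<notin> dl p ` {..<m}" by (auto simp: dl_def)
  moreover have "inj_on (dl p) {..<m}" by (simp add: inj_on_def dl_inj)
  ultimately show ?thesis unfolding im by (simp add: sum.reindex)
qed


lemma E_det:
  assumes p: "p \<le> m" and Mp: "M p p \<noteq> 0"
  shows "det (mat (Suc m) (Suc m) (\<lambda>(i,j). M i j)) = M p p * det (mat m m (\<lambda>(i,j). elim p M i j))"
proof -
  let ?n = "Suc m"
  define A where "A = mat ?n ?n (\<lambda>(i,j). M i j)"
  define L where "L = mat ?n ?n (\<lambda>(i,j). if i = j then 1 else if j = p then - M i p / M p p else (0::real))"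
  have Ac: "A \<in> carrier_mat ?n ?n" unfolding A_def by simp
  have Lc: "L \<in> carrier_mat ?n ?n" unfolding L_def by simp
  have pn: "p < ?n" using p by simp
  have detL: "det L = 1"
  proof -
    have "det L = (\<Sum>j<?n. L $$ (p,j) * cofactor L p j)" by (rule laplace_expansion_row[OF Lc pn])
    also have "\<dots> = (\<Sum>j<?n. (if j = p then cofactor L p j else 0))"
      by (rule sum.cong, simp, auto simp: L_def pn)
    also have "\<dots> = cofactor L p p" using pn by simp
    also have "mat_delete L p p = 1\<^sub>m m"
      by (rule eq_matI, auto simp: mat_delete_def L_def dl_def)
    hence "cofactor L p p = 1" unfolding cofactor_def by simp
    finally show ?thesis .
  qed
  define B where "B = mat ?n ?n (\<lambda>(i,j). if i = p then M p j else M i j - M i p / M p p * M p j)"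
  have LA: "L * A = B"
  proof (rule eq_matI)
    fix i j assume i: "i < dim_row B" and j: "j < dim_col B"
    hence i: "i < ?n" and j: "j < ?n" by (auto simp: B_def)
    have "(L * A) $$ (i,j) = (\<Sum>k<?n. L $$ (i,k) * A $$ (k,j))"
      using i j Lc Ac by (simp add: scalar_prod_def lessThan_atLeast0)
    also have "\<dots> = (\<Sum>k<?n. (if k = i then M i j else 0) + (if k = p \<and> i \<noteq> p then - M i p / M p p * M p j else 0))"
      by (rule sum.cong, simp, auto simp: L_def A_def i j)
    also have "\<dots> = B $$ (i,j)"
      using i j pn by (simp add: sum.distrib B_def)
    finally show "(L * A) $$ (i,j) = B $$ (i,j)" .
  qed (auto simp: B_def L_def A_def)
  have Bc: "B \<in> carrier_mat ?n ?n" unfolding B_def by simp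
  have "det A = det B" using det_mult[OF Lc Ac] detL LA by simp
  also have "det B = (\<Sum>i<?n. B $$ (i,p) * cofactor B i p)" by (rule laplace_expansion_column[OF Bc pn])
  also have "\<dots> = (\<Sum>i<?n. if i = p then M p p * cofactor B p p else 0)"
    by (rule sum.cong, simp, auto simp: B_def pn Mp)
  also have "\<dots> = M p p * cofactor B p p" using pn by simp
  also have "mat_delete B p p = mat m m (\<lambda>(i,j). elim p M i j)"
    by (rule eq_matI, auto simp: mat_delete_def B_def elim_def dl_def)
  hence "cofactor B p p = det (mat m m (\<lambda>(i,j). elim p M i j))" unfolding cofactor_def by simp
  finally show ?thesis unfolding A_def by simp
qed

lemma E_quad:
  assumes p: "p \<le> m" and Mp: "M p p \<noteq> 0" and sym: "\<forall>i<Suc m. \<forall>j<Suc m. M i j = M j i"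
  shows "Qf (Suc m) M x = M p p * (x p + (\<Sum>j<m. M p (dl p j) * x (dl p j)) / M p p)^2
           + Qf m (elim p M) (\<lambda>i. x (dl p i))"
proof -
  define S where "S = (\<Sum>j<m. M p (dl p j) * x (dl p j))"
  define R where "R = (\<Sum>i<m. \<Sum>j<m. x (dl p i) * M (dl p i) (dl p j) * x (dl p j))"
  have 1: "Qf (Suc m) M x = x p * M p p * x p + x p * S + (\<Sum>i<m. x (dl p i) * M (dl p i) p * x p) + R"
    unfolding Qf_def S_def R_def
    apply (simp only: sum_split[OF p, of "\<lambda>i. \<Sum>j<Suc m. x i * M i j * x j"])
    apply (simp only: sum_split[OF p, of "\<lambda>j. x _ * M _ j * x j"])
    by (simp add: sum.distrib sum_distrib_left algebra_simps)
  have 2: "(\<Sum>i<m. x (dl p i) * M (dl p i) p * x p) = x p * S"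
    unfolding S_def sum_distrib_left
    by (rule sum.cong, simp, insert sym p, auto simp: dl_lt)
  have 3: "Qf m (elim p M) (\<lambda>i. x (dl p i)) = R - S * S / M p p"
  proof -
    have "Qf m (elim p M) (\<lambda>i. x (dl p i)) =
       R - (\<Sum>i<m. \<Sum>j<m. (M p (dl p i) * x (dl p i)) * (M p (dl p j) * x (dl p j))) / M p p"
      unfolding Qf_def R_def elim_def
      apply (simp add: sum_subtractf sum_divide_distrib right_diff_distrib left_diff_distrib)
      apply (rule sum.cong, simp, rule sum.cong, simp)
      using sym p by (auto simp: dl_lt)
    also have "(\<Sum>i<m. \<Sum>j<m. (M p (dl p i) * x (dl p i)) * (M p (dl p j) * x (dl p j))) = S * S"
      unfolding S_def by (simp add: sum_product)
    finally show ?thesis .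
  qed
  show ?thesis unfolding 3 S_def[symmetric] using 1 2 Mp
    by (simp add: field_simps power2_eq_square)
qed


definition symm :: "nat \<Rightarrow> (nat\<Rightarrow>nat\<Rightarrow>real) \<Rightarrow> bool" where
  "symm m M \<longleftrightarrow> (\<forall>i<m. \<forall>j<m. M i j = M j i)"
definition PD :: "nat \<Rightarrow> (nat\<Rightarrow>nat\<Rightarrow>real) \<Rightarrow> bool" where
  "PD m M \<longleftrightarrow> (\<forall>x. (\<exists>i<m. x i \<noteq> 0) \<longrightarrow> Qf m M x > 0)"

lemma undl: "i \<noteq> p \<Longrightarrow> i < Suc m \<Longrightarrow> p \<le> m \<Longrightarrow> \<exists>j<m. dl p j = i"
  by (rule exI[of _ "if i < p then i else i - 1"], auto simp: dl_def)

lemma Qf_ind: "p < m \<Longrightarrow> Qf m M (\<lambda>k. if k = p then 1 else 0) = M p p"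
  by (simp add: Qf_def if_distrib if_distribR sum.If_cases)

lemma Qf_zero: "(\<forall>i<m. y i = 0) \<Longrightarrow> Qf m M y = 0"
  by (simp add: Qf_def)

lemma reduce:
  assumes p: "p \<le> m" and sy: "symm (Suc m) M" and Mp: "M p p > 0"
  shows "symm m (elim p M)"
    and "\<And>y. \<exists>x. (\<forall>i. x (dl p i) = y i) \<and> Qf (Suc m) M x = Qf m (elim p M) y"
    and "\<And>x. Qf (Suc m) M x \<ge> Qf m (elim p M) (\<lambda>i. x (dl p i))"
proof -
  have sym: "\<forall>i<Suc m. \<forall>j<Suc m. M i j = M j i" using sy by (simp add: symm_def)
  show "symm m (elim p M)" unfolding symm_def elim_def using sym p
    by (auto simp: dl_lt)
  fix y :: "nat \<Rightarrow> real"
  define S where "S = (\<Sum>j<m. M p (dl p j) * y j)"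
  define x where "x = (\<lambda>k. if k = p then - S / M p p else y (if k < p then k else k - 1))"
  have xd: "\<forall>i. x (dl p i) = y i" by (auto simp: x_def dl_def)
  have "Qf (Suc m) M x = Qf m (elim p M) y"
    using E_quad[OF p _ sym, of x] Mp xd by (simp add: x_def S_def)
  then show "\<exists>x. (\<forall>i. x (dl p i) = y i) \<and> Qf (Suc m) M x = Qf m (elim p M) y" using xd by blast
next
  fix x :: "nat \<Rightarrow> real"
  have sym: "\<forall>i<Suc m. \<forall>j<Suc m. M i j = M j i" using sy by (simp add: symm_def)
  show "Qf (Suc m) M x \<ge> Qf m (elim p M) (\<lambda>i. x (dl p i))"
    using E_quad[OF p _ sym, of x] Mp by simp
qed

lemma PD_det:
  assumes "symm m M" "PD m M"
  shows "det (mat m m (\<lambda>(i,j). M i j)) > 0"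
  using assms
proof (induction m arbitrary: M)
  case 0
  then show ?case by simp
next
  case (Suc m)
  have M0: "M 0 0 > 0"
    using Suc.prems(2) Qf_ind[of 0 "Suc m" M] unfolding PD_def
    by (metis (mono_tags, lifting) one_neq_zero zero_less_Suc)
  note r = reduce[OF le0 Suc.prems(1) M0]
  have "PD m (elim 0 M)" unfolding PD_def
  proof (intro allI impI)
    fix y :: "nat \<Rightarrow> real" assume "\<exists>i<m. y i \<noteq> 0"
    then obtain i where i: "i < m" "y i \<noteq> 0" by blast
    obtain x where x: "\<forall>i. x (dl 0 i) = y i" "Qf (Suc m) M x = Qf m (elim 0 M) y"
      using r(2) by blast
    have "\<exists>i<Suc m. x i \<noteq> 0" using x(1) i dl_lt by metis
    then show "Qf m (elim 0 M) y > 0" using Suc.prems(2) x(2) unfolding PD_def by auto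
  qed
  then have "det (mat m m (\<lambda>(i,j). elim 0 M i j)) > 0" using Suc.IH r(1) by blast
  then show ?case using E_det[OF le0, of M m] M0 by simp
qed

lemma det_PD:
  assumes "symm (Suc m) M" "k \<le> m"
    "\<forall>x. x k = 0 \<and> (\<exists>i<Suc m. x i \<noteq> 0) \<longrightarrow> Qf (Suc m) M x > 0"
    "det (mat (Suc m) (Suc m) (\<lambda>(i,j). M i j)) > 0"
  shows "PD (Suc m) M"
  using assms
proof (induction m arbitrary: M k)
  case 0
  define A where "A = mat 1 1 (\<lambda>(i,j). M i j)"
  have Ac: "A \<in> carrier_mat 1 1" unfolding A_def by simp
  have "det A = (\<Sum>i<1. A $$ (i,0) * cofactor A i 0)" by (rule laplace_expansion_column[OF Ac], simp)
  also have "det (mat_delete A 0 0) = 1" using mat_delete_carrier[OF Ac] by simp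
  hence "(\<Sum>i<1. A $$ (i,0) * cofactor A i 0) = M 0 0" unfolding cofactor_def
    by (simp add: A_def)
  finally have "M 0 0 > 0" using "0.prems"(4) A_def by simp
  show ?case unfolding PD_def Qf_def
  proof (intro allI impI)
    fix x :: "nat\<Rightarrow>real" assume "\<exists>i<Suc 0. x i \<noteq> 0"
    hence "x 0 \<noteq> 0" by auto
    hence "x 0 * x 0 > 0" by (metis not_real_square_gt_zero)
    hence "M 0 0 * (x 0 * x 0) > 0" using \<open>M 0 0 > 0\<close> by simp
    then show "(\<Sum>i<Suc 0. \<Sum>j<Suc 0. x i * M i j * x j) > 0" by (simp add: ac_simps)
  qed
next
  case (Suc m')
  define p where "p = (if k = 0 then Suc m' else 0)"
  define k' where "k' = (if k = 0 then 0 else k - 1)"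
  have p: "p \<le> Suc m'" "p \<noteq> k" unfolding p_def by auto
  have k': "dl p k' = k" "k' \<le> m'" using Suc.prems(2) unfolding p_def k'_def dl_def by auto
  have Mp: "M p p > 0"
  proof -
    have "p < Suc (Suc m')" using p by simp
    then have "(\<lambda>k::nat. if k = p then 1 else (0::real)) k = 0 \<and> (\<exists>i<Suc (Suc m'). (\<lambda>k::nat. if k = p then 1 else (0::real)) i \<noteq> 0)"
      using p(2) by auto
    then have "Qf (Suc (Suc m')) M (\<lambda>k::nat. if k = p then 1 else (0::real)) > 0"
      by (rule Suc.prems(3)[rule_format])
    then show ?thesis using Qf_ind[of p "Suc (Suc m')" M] \<open>p < Suc (Suc m')\<close> by simp
  qed
  note r = reduce[OF p(1) Suc.prems(1) Mp]
  have dt: "det (mat (Suc m') (Suc m') (\<lambda>(i,j). elim p M i j)) > 0"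
    using E_det[OF p(1), of M] Mp Suc.prems(4) by (simp add: zero_less_mult_iff)
  have cpl: "\<forall>y. y k' = 0 \<and> (\<exists>i<Suc m'. y i \<noteq> 0) \<longrightarrow> Qf (Suc m') (elim p M) y > 0"
  proof (intro allI impI)
    fix y :: "nat \<Rightarrow> real" assume y: "y k' = 0 \<and> (\<exists>i<Suc m'. y i \<noteq> 0)"
    then obtain i where i: "i < Suc m'" "y i \<noteq> 0" by blast
    obtain x where x: "\<forall>i. x (dl p i) = y i" "Qf (Suc (Suc m')) M x = Qf (Suc m') (elim p M) y"
      using r(2) by blast
    have "\<exists>i<Suc (Suc m'). x i \<noteq> 0" using x(1) i dl_lt by metis
    moreover have "x k = 0" using x(1) k'(1) y by metis
    ultimately show "Qf (Suc m') (elim p M) y > 0" using Suc.prems(3) x(2) by auto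
  qed
  have PD': "PD (Suc m') (elim p M)" using Suc.IH[OF r(1) k'(2) cpl dt] .
  show ?case unfolding PD_def
  proof (intro allI impI)
    fix x :: "nat \<Rightarrow> real" assume "\<exists>i<Suc (Suc m'). x i \<noteq> 0"
    then obtain i where i: "i < Suc (Suc m')" "x i \<noteq> 0" by blast
    show "Qf (Suc (Suc m')) M x > 0"
    proof (cases "\<exists>j<Suc m'. x (dl p j) \<noteq> 0")
      case True
      then show ?thesis using PD' r(3)[of x] unfolding PD_def
        by (metis (no_types, lifting) order_less_le_trans)
    next
      case False
      have ip: "i = p" using undl[OF _ i(1) p(1)] False i(2) by metis
      have sym: "\<forall>i<Suc (Suc m'). \<forall>j<Suc (Suc m'). M i j = M j i"
        using Suc.prems(1) by (simp add: symm_def)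
      have "Qf (Suc (Suc m')) M x = M p p * (x p)^2"
        using E_quad[OF p(1) _ sym, of x] Mp False Qf_zero[of "Suc m'" "\<lambda>i. x (dl p i)"]
        by (simp add: field_simps)
      then show ?thesis using Mp i(2) ip by simp
    qed
  qed
qed


definition Q1 :: "nat set \<Rightarrow> (nat\<Rightarrow>nat\<Rightarrow>real) \<Rightarrow> (nat\<Rightarrow>real) \<Rightarrow> real" where
  "Q1 I M x = (\<Sum>i\<in>I. \<Sum>j\<in>I. x i * M i j * x j)"

lemma Q1_shift: "Q1 {1..n} M x = Qf n (\<lambda>i j. M (Suc i) (Suc j)) (\<lambda>i. x (Suc i))"
  unfolding Q1_def Qf_def One_nat_def sum.atLeast1_atMost_eq ..

lemma Q1_nonneg: "pos_def_on I M \<Longrightarrow> Q1 I M x \<ge> 0"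
  unfolding pos_def_on_def Q1_def
  by (cases "\<exists>i\<in>I. x i \<noteq> 0") (auto intro: less_imp_le)

lemma Q1_restrict:
  assumes "A \<subseteq> I" "finite I"
  shows "(\<Sum>i\<in>I. \<Sum>j\<in>I. (if i \<in> A then (if j \<in> A then h i j else 0) else (0::real))) = (\<Sum>i\<in>A. \<Sum>j\<in>A. h i j)"
proof -
  have e: "I \<inter> A = A" using assms by auto
  have "(\<Sum>i\<in>I. \<Sum>j\<in>I. (if i \<in> A then (if j \<in> A then h i j else 0) else (0::real)))
      = (\<Sum>i\<in>I. (if i \<in> A then (\<Sum>j\<in>I. (if j \<in> A then h i j else 0)) else 0))"
    by (rule sum.cong, auto)
  also have "\<dots> = (\<Sum>i\<in>A. \<Sum>j\<in>I. (if j \<in> A then h i j else 0))"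
    using sum.inter_restrict[OF assms(2), of "\<lambda>i. \<Sum>j\<in>I. (if j \<in> A then h i j else 0)" A] e by simp
  also have "\<dots> = (\<Sum>i\<in>A. \<Sum>j\<in>A. h i j)"
  proof (rule sum.cong[OF refl])
    fix i
    show "(\<Sum>j\<in>I. (if j \<in> A then h i j else 0)) = (\<Sum>j\<in>A. h i j)"
      using sum.inter_restrict[OF assms(2), of "h i" A] e by simp
  qed
  finally show ?thesis .
qed

theorem mainTheorem7:
  fixes n f :: nat and G :: "nat \<Rightarrow> nat \<Rightarrow> real" and r1 r2 d1 d2 :: real
  assumes "1 \<le> f" and "f \<le> n"
    and "\<forall>i\<in>{1..n}. \<forall>j\<in>{1..n}. G i j = G j i"
    and "G f f = 0"
    and "\<forall>i j. 1 \<le> i \<and> i < f \<and> f < j \<and> j \<le> n \<longrightarrow> G i j = 0"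
    and "semisimple_gram {1..<f} G" and "long_root_sqlen {1..<f} G (2 * d1)"
    and "semisimple_gram {f<..n} G" and "long_root_sqlen {f<..n} G (2 * d2)"
    and "0 < r1" and "r1 \<le> 1 / (2 * d1)"
    and "0 < r2" and "r2 \<le> 1 / (2 * d2)"
    and "det (mat_of_fun n (mS G f r1 r2)) > 0"
  shows "pos_def_on {1..n} (mS G f r1 r2) \<and> (\<forall>i\<in>{1..n}. mS G f r1 r2 i i \<le> 1)"
proof
  let ?M = "mS G f r1 r2"
  define A where "A = {1..<f}"
  define B where "B = {f<..n}"
  have pdA: "pos_def_on A G" using assms(6) unfolding semisimple_gram_def A_def by simp
  have pdB: "pos_def_on B G" using assms(8) unfolding semisimple_gram_def B_def by simp
  have compl: "Q1 {1..n} ?M x > 0" if x0: "x f = 0" and nz: "\<exists>i\<in>{1..n}. x i \<noteq> 0" for x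
  proof -
    have pt: "x i * ?M i j * x j =
        (if i \<in> A then (if j \<in> A then r1 * (x i * G i j * x j) else 0) else 0)
      + (if i \<in> B then (if j \<in> B then r2 * (x i * G i j * x j) else 0) else 0)"
      if "i \<in> {1..n}" "j \<in> {1..n}" for i j
    proof -
      have i1: "1 \<le> i" and j1: "1 \<le> j" using that by auto
      consider "i < f \<and> j < f" | "f < i \<and> f < j" | "i = f \<or> j = f" | "(i < f \<and> f < j) \<or> (f < i \<and> j < f)"
        by linarith
      then show ?thesis
      proof cases
        case 1 thus ?thesis using i1 j1 by (simp add: mS_def A_def B_def)
      next
        case 2 thus ?thesis using that by (simp add: mS_def A_def B_def)
      next
        case 3 thus ?thesis using x0 by (auto simp: A_def B_def)
      next
        case 4 thus ?thesis by (auto simp: mS_def A_def B_def)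
      qed
    qed
    have "Q1 {1..n} ?M x =
      (\<Sum>i\<in>{1..n}. \<Sum>j\<in>{1..n}. (if i \<in> A then (if j \<in> A then r1 * (x i * G i j * x j) else 0) else 0))
      + (\<Sum>i\<in>{1..n}. \<Sum>j\<in>{1..n}. (if i \<in> B then (if j \<in> B then r2 * (x i * G i j * x j) else 0) else 0))"
      unfolding Q1_def sum.distrib[symmetric] by (rule sum.cong, simp, rule sum.cong, simp, simp add: pt)
    also have "\<dots> = (\<Sum>i\<in>A. \<Sum>j\<in>A. r1 * (x i * G i j * x j)) + (\<Sum>i\<in>B. \<Sum>j\<in>B. r2 * (x i * G i j * x j))"
    proof -
      have "A \<subseteq> {1..n}" "B \<subseteq> {1..n}" using assms(2) by (auto simp: A_def B_def)
      thus ?thesis using Q1_restrict[of A "{1..n}"] Q1_restrict[of B "{1..n}"] by simp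
    qed
    also have "\<dots> = r1 * Q1 A G x + r2 * Q1 B G x"
      unfolding Q1_def sum_distrib_left by (simp add: ac_simps)
    finally have eq: "Q1 {1..n} ?M x = r1 * Q1 A G x + r2 * Q1 B G x" .
    obtain i where i: "i \<in> {1..n}" "x i \<noteq> 0" using nz by blast
    have "i \<noteq> f" using i x0 by auto
    hence "i \<in> A \<or> i \<in> B" using i by (auto simp: A_def B_def)
    moreover have "Q1 A G x \<ge> 0" "Q1 B G x \<ge> 0" using Q1_nonneg pdA pdB by auto
    moreover have "i \<in> A \<Longrightarrow> Q1 A G x > 0" unfolding Q1_def
      by (rule pdA[unfolded pos_def_on_def, rule_format], use i in blast)
    moreover have "i \<in> B \<Longrightarrow> Q1 B G x > 0" unfolding Q1_def
      by (rule pdB[unfolded pos_def_on_def, rule_format], use i in blast)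
    ultimately show ?thesis unfolding eq using assms(10,12)
      by (smt (verit) mult_nonneg_nonneg mult_pos_pos)
  qed
  obtain m where m: "n = Suc m" using assms(1,2) by (cases n) auto
  define N where "N = (\<lambda>i j. ?M (Suc i) (Suc j))"
  have symN: "symm n N" unfolding symm_def N_def
  proof (intro allI impI)
    fix i j assume "i < n" "j < n"
    hence "Suc i \<in> {1..n}" "Suc j \<in> {1..n}" by auto
    thus "?M (Suc i) (Suc j) = ?M (Suc j) (Suc i)" using assms(3) by (auto simp: mS_def)
  qed
  have cN: "\<forall>y. y (f - 1) = 0 \<and> (\<exists>i<Suc m. y i \<noteq> 0) \<longrightarrow> Qf (Suc m) N y > 0"
  proof (intro allI impI)
    fix y :: "nat \<Rightarrow> real" assume y: "y (f - 1) = 0 \<and> (\<exists>i<Suc m. y i \<noteq> 0)"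
    define x where "x = (\<lambda>i. y (i - 1))"
    have "x f = 0" using y by (simp add: x_def)
    moreover obtain i where "i < Suc m" "y i \<noteq> 0" using y by blast
    hence "Suc i \<in> {1..n}" "x (Suc i) \<noteq> 0" using m by (auto simp: x_def)
    ultimately have "Q1 {1..n} ?M x > 0" using compl by blast
    moreover have "(\<lambda>i. x (Suc i)) = y" by (simp add: x_def)
    ultimately show "Qf (Suc m) N y > 0" using Q1_shift[of n ?M x] m N_def by simp
  qed
  have dN: "det (mat (Suc m) (Suc m) (\<lambda>(i,j). N i j)) > 0"
    using assms(14) m unfolding mat_of_fun_def N_def by simp
  have PDN: "PD (Suc m) N"
    by (rule det_PD[OF symN[unfolded m] _ cN dN], use assms(1,2) m in simp)
  show "pos_def_on {1..n} ?M" unfolding pos_def_on_def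
  proof (intro allI impI)
    fix x :: "nat \<Rightarrow> real" assume "\<exists>i\<in>{1..n}. x i \<noteq> 0"
    then obtain i where "i \<in> {1..n}" "x i \<noteq> 0" by blast
    hence "i - 1 < Suc m" "x (Suc (i - 1)) \<noteq> 0" using m by auto
    hence "\<exists>j<Suc m. (\<lambda>i. x (Suc i)) j \<noteq> 0" by blast
    hence "Qf (Suc m) N (\<lambda>i. x (Suc i)) > 0" by (rule PDN[unfolded PD_def, rule_format])
    thus "(\<Sum>i\<in>{1..n}. \<Sum>j\<in>{1..n}. x i * ?M i j * x j) > 0"
      using Q1_shift[of n ?M x] m N_def unfolding Q1_def by simp
  qed
next
  show "\<forall>i\<in>{1..n}. mS G f r1 r2 i i \<le> 1"
  proof
    fix i assume i: "i \<in> {1..n}"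
    consider "i < f" | "i = f" | "f < i" by linarith
    then show "mS G f r1 r2 i i \<le> 1"
    proof cases
      case 1
      hence iA: "i \<in> {1..<f}" using i by auto
      have "G i i > 0" using assms(6) iA unfolding semisimple_gram_def by blast
      moreover have "G i i \<le> 2 * d1" using assms(7) iA unfolding long_root_sqlen_def by blast
      ultimately have "d1 > 0" "r1 * G i i \<le> r1 * (2 * d1)" using assms(10) by auto
      moreover have "r1 * (2 * d1) \<le> 1" using assms(11) \<open>d1 > 0\<close> by (simp add: field_simps)
      ultimately show ?thesis using 1 by (simp add: mS_def)
    next
      case 2 thus ?thesis by (simp add: mS_def)
    next
      case 3
      hence iB: "i \<in> {f<..n}" using i by auto
      have "G i i > 0" using assms(8) iB unfolding semisimple_gram_def by blast
      moreover have "G i i \<le> 2 * d2" using assms(9) iB unfolding long_root_sqlen_def by blast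
      ultimately have "d2 > 0" "r2 * G i i \<le> r2 * (2 * d2)" using assms(12) by auto
      moreover have "r2 * (2 * d2) \<le> 1" using assms(13) \<open>d2 > 0\<close> by (simp add: field_simps)
      ultimately show ?thesis using 3 by (simp add: mS_def)
    qed
  qed
qed

end
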